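(* Fix an arbitrary execution of Algorithm $\mathrm{tree}(G)$ on $G$, and let $r$ be the rank defined in the context. Then every vertex $u$ of $G$ has at most one neighbor $v$ in $G$ with $r(u)<r(v)$.
   Context: $G$ is a finite connected simple undirected graph containing a vertex $a$ with $d_G(a)\ge 2$. For a subtree $T$ of $G$ and a vertex $u$ of $T$: - $V_T(u)$ is the set of vertices $v\in V(G)\setminus V(T)$ with $uv\in E(G)$. - $E_T(u)$ is the set of edges $uv$ of $G$ with $v\in V_T(u)$. - If $|V_T(u)|=1$, then $v_T(u)$ denotes the unique vertex of $V_T(u)$. Three sets of vertices of $T$ are defined: - $W_2(T)=\{u\in V(T): |V_T(u)|\ge 2\}$. - $W_1(T)=\{u\in V(T): |V_T(u)|=1,\ |V_{T\cup E_T(u)}(v_T(u))|\ge 2\}$. - $W_0(T)=\{u\in V(T): |V_T(u)|=1,\ |V_{T\cup E_T(u)}(v_T(u))|\le 1\}$. Algorithm $\mathrm{tree}(G)$ runs as follows. 1. Start with $T=\{a\}$. 2. While $V(T)\ne V(G)$: - If $W_2(T)\ne\emptyset$, pick an arbitrary $u\in W_2(T)$. - Else, if $W_1(T)\neq\emptyset$, pick an arbitrary $u\in W_1(T)$. - Else, let $u$ be the vertex of $W_0(T)$ that joined $V(T)$ most recently. - Set $T:=T\cup E_T(u)$ ("expand $T$ at $u$"). 3. Return $T$. Now fix an execution and let $T$ be the returned spanning tree, rooted at $a$. For $v\ne a$, let $p(v)$ be the parent of $v$ in $T$. For each vertex $u$ with $d_T(u)\ge 2$, let $T_u$ be the tree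 just before the (unique) expansion at $u$. The rank $r:V(G)\to\mathbb{Z}$ is defined by $r(a)=1$ and, for each edge $uv$ of $T$ with $u=p(v)$: - $r(v)=r(u)$ if $u\in W_2(T_u)$; - $r(v)=1+\max_{w\in V(T_u)} r(w)$ otherwise. *)

theory Defs
  imports Main
begin

definition simple_graph :: "'a set \<Rightarrow> ('a \<Rightarrow> 'a \<Rightarrow> bool) \<Rightarrow> bool" where
  "simple_graph V E \<longleftrightarrow> finite V \<and> (\<forall>u v. E u v \<longrightarrow> u \<in> V \<and> v \<in> V)
     \<and> (\<forall>u v. E u v \<longrightarrow> E v u) \<and> (\<forall>u. \<not> E u u)"

definition connected_graph :: "'a set \<Rightarrow> ('a \<Rightarrow> 'a \<Rightarrow> bool) \<Rightarrow> bool" where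
  "connected_graph V E \<longleftrightarrow> V \<noteq> {} \<and> (\<forall>u\<in>V. \<forall>v\<in>V. E\<^sup>*\<^sup>* u v)"

text \<open>A subtree grown by the algorithm is determined by its vertex set S
  (every new vertex is attached to the vertex at which the tree is expanded).
  V_T(u) for T with vertex set S:\<close>
definition VT :: "'a set \<Rightarrow> ('a \<Rightarrow> 'a \<Rightarrow> bool) \<Rightarrow> 'a set \<Rightarrow> 'a \<Rightarrow> 'a set" where
  "VT V E S u = {v \<in> V - S. E u v}"

definition W2 :: "'a set \<Rightarrow> ('a \<Rightarrow> 'a \<Rightarrow> bool) \<Rightarrow> 'a set \<Rightarrow> 'a set" where
  "W2 V E S = {u \<in> S. card (VT V E S u) \<ge> 2}"

definition W1 :: "'a set \<Rightarrow> ('a \<Rightarrow> 'a \<Rightarrow> bool) \<Rightarrow> 'a set \<Rightarrow> 'a set" where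
  "W1 V E S = {u \<in> S. card (VT V E S u) = 1 \<and>
      card (VT V E (S \<union> VT V E S u) (the_elem (VT V E S u))) \<ge> 2}"

definition W0 :: "'a set \<Rightarrow> ('a \<Rightarrow> 'a \<Rightarrow> bool) \<Rightarrow> 'a set \<Rightarrow> 'a set" where
  "W0 V E S = {u \<in> S. card (VT V E S u) = 1 \<and>
      card (VT V E (S \<union> VT V E S u) (the_elem (VT V E S u))) \<le> 1}"

text \<open>The execution is recorded as the list us of vertices at which the tree is
  expanded, in order. tstate i is the vertex set of the tree after i expansions.\<close>
fun tstate :: "'a set \<Rightarrow> ('a \<Rightarrow> 'a \<Rightarrow> bool) \<Rightarrow> 'a \<Rightarrow> 'a list \<Rightarrow> nat \<Rightarrow> 'a set" where
  "tstate V E a us 0 = {a}"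
| "tstate V E a us (Suc i) = tstate V E a us i \<union> VT V E (tstate V E a us i) (us ! i)"

definition join_time :: "'a set \<Rightarrow> ('a \<Rightarrow> 'a \<Rightarrow> bool) \<Rightarrow> 'a \<Rightarrow> 'a list \<Rightarrow> 'a \<Rightarrow> nat" where
  "join_time V E a us v = (LEAST j. v \<in> tstate V E a us j)"

definition tree_execution :: "'a set \<Rightarrow> ('a \<Rightarrow> 'a \<Rightarrow> bool) \<Rightarrow> 'a \<Rightarrow> 'a list \<Rightarrow> bool" where
  "tree_execution V E a us \<longleftrightarrow>
     (\<forall>i < length us.
        (let S = tstate V E a us i; u = us ! i in
          S \<noteq> V \<and>
          (if W2 V E S \<noteq> {} then u \<in> W2 V E S
           else if W1 V E S \<noteq> {} then u \<in> W1 V E S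
           else u \<in> W0 V E S \<and>
                (\<forall>w \<in> W0 V E S. join_time V E a us w \<le> join_time V E a us u))))
     \<and> tstate V E a us (length us) = V"

fun rank_upto :: "'a set \<Rightarrow> ('a \<Rightarrow> 'a \<Rightarrow> bool) \<Rightarrow> 'a \<Rightarrow> 'a list \<Rightarrow> nat \<Rightarrow> 'a \<Rightarrow> int" where
  "rank_upto V E a us 0 = (\<lambda>v. 1)"
| "rank_upto V E a us (Suc i) =
     (let S = tstate V E a us i; u = us ! i; r = rank_upto V E a us i in
       (\<lambda>v. if v \<in> VT V E S u then
               (if u \<in> W2 V E S then r u else 1 + Max (r ` S))
             else r v))"

definition rank :: "'a set \<Rightarrow> ('a \<Rightarrow> 'a \<Rightarrow> bool) \<Rightarrow> 'a \<Rightarrow> 'a list \<Rightarrow> 'a \<Rightarrow> int" where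
  "rank V E a us = rank_upto V E a us (length us)"

end

theory Submission
  imports Defs
begin

locale tex =
  fixes V :: "'a set" and E :: "'a \<Rightarrow> 'a \<Rightarrow> bool" and a :: 'a and us :: "'a list"
  assumes sg: "simple_graph V E" and aV: "a \<in> V" and te: "tree_execution V E a us"
begin

abbreviation S where "S i \<equiv> tstate V E a us i"
abbreviation R where "R i \<equiv> rank_upto V E a us i"
abbreviation M where "M i \<equiv> Max (R i ` S i)"
abbreviation N where "N i \<equiv> VT V E (S i) (us ! i)"
abbreviation n where "n \<equiv> length us"

lemma finV: "finite V" using sg by (simp add: simple_graph_def)

lemma VT_sub: "VT V E T x \<subseteq> V - T" by (auto simp: VT_def)

lemma VT_anti: "T \<subseteq> T' \<Longrightarrow> VT V E T' x \<subseteq> VT V E T x" by (auto simp: VT_def)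

lemma S_sub: "S i \<subseteq> V"
  by (induction i) (use aV VT_sub in auto)

lemma finS: "finite (S i)" using S_sub finV finite_subset by blast

lemma aS: "a \<in> S i" by (induction i) auto

lemma S_mono: "i \<le> j \<Longrightarrow> S i \<subseteq> S j"
  by (rule lift_Suc_mono_le[of S]) auto

lemma S_n: "S n = V" using te by (simp add: tree_execution_def)

lemma choice: assumes "i < n"
  shows "(W2 V E (S i) \<noteq> {} \<longrightarrow> us!i \<in> W2 V E (S i)) \<and> N i \<noteq> {} \<and> us ! i \<in> S i"
proof -
  have h: "(if W2 V E (S i) \<noteq> {} then us!i \<in> W2 V E (S i)
           else if W1 V E (S i) \<noteq> {} then us!i \<in> W1 V E (S i)
           else us!i \<in> W0 V E (S i) \<and>
                (\<forall>w \<in> W0 V E (S i). join_time V E a us w \<le> join_time V E a us (us!i)))"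
    using te assms by (simp add: tree_execution_def Let_def)
  show ?thesis
  proof (cases "W2 V E (S i) \<noteq> {}")
    case True
    then show ?thesis using h by (auto simp: W2_def)
  next
    case False
    then show ?thesis using h by (auto simp: W1_def W0_def split: if_splits)
  qed
qed

lemma R_old: "x \<in> S i \<Longrightarrow> R (Suc i) x = R i x"
  using VT_sub by (auto simp: Let_def)

lemma R_keep: "i \<le> j \<Longrightarrow> x \<in> S i \<Longrightarrow> R j x = R i x"
proof (induction j rule: dec_induct)
  case base
  then show ?case by simp
next
  case (step j)
  then show ?case using S_mono[of i j] R_old[of x j] by auto
qed

definition c where "c i = (if us!i \<in> W2 V E (S i) then R i (us!i) else 1 + M i)"

lemma R_new: "x \<in> N i \<Longrightarrow> R (Suc i) x = c i"
  by (simp add: Let_def c_def)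

lemma R_le_M: "x \<in> S i \<Longrightarrow> R i x \<le> M i"
  using finS by (auto intro: Max_ge)

definition A where "A i \<longleftrightarrow> (\<forall>x\<in>S i. 2 \<le> card (VT V E (S i) x) \<longrightarrow> R i x = M i)"

lemma stepL:
  assumes "i < n" "A i"
  shows "M i \<le> c i" "M (Suc i) = c i" "A (Suc i)"
proof -
  have ch: "(W2 V E (S i) \<noteq> {} \<longrightarrow> us!i \<in> W2 V E (S i)) \<and> N i \<noteq> {} \<and> us ! i \<in> S i"
    using choice assms(1) .
  show ci: "M i \<le> c i"
  proof (cases "us!i \<in> W2 V E (S i)")
    case True
    then have "R i (us!i) = M i" using assms(2) by (auto simp: A_def W2_def)
    then show ?thesis using True by (simp add: c_def)
  next
    case False
    then show ?thesis by (simp add: c_def)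
  qed
  have img: "R (Suc i) ` S (Suc i) = insert (c i) (R i ` S i)"
  proof -
    have "R (Suc i) ` S (Suc i) = R (Suc i) ` S i \<union> R (Suc i) ` N i" by (simp add: image_Un)
    also have "R (Suc i) ` S i = R i ` S i" using R_old by (auto simp: image_def)
    also have "R (Suc i) ` N i = {c i}" using R_new ch by auto
    finally show ?thesis by auto
  qed
  have "M (Suc i) = max (c i) (M i)"
    unfolding img using finS aS by (subst Max_insert) auto
  then show MS: "M (Suc i) = c i" using ci by simp
  show "A (Suc i)"
    unfolding A_def
  proof (intro ballI impI)
    fix x assume xS: "x \<in> S (Suc i)" and cx: "2 \<le> card (VT V E (S (Suc i)) x)"
    show "R (Suc i) x = M (Suc i)"
    proof (cases "x \<in> S i")
      case True
      have "VT V E (S (Suc i)) x \<subseteq> VT V E (S i) x" by (rule VT_anti) auto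
      moreover have "finite (VT V E (S i) x)" using VT_sub finV by (meson finite_Diff finite_subset)
      ultimately have c2: "2 \<le> card (VT V E (S i) x)" using cx card_mono by (meson le_trans)
      then have "x \<in> W2 V E (S i)" using True by (simp add: W2_def)
      then have w2: "us!i \<in> W2 V E (S i)" using ch by auto
      then have "R i (us!i) = M i" using assms(2) by (auto simp: A_def W2_def)
      moreover have "R i x = M i" using assms(2) True c2 by (auto simp: A_def)
      ultimately show ?thesis using MS w2 R_old[OF True] by (simp add: c_def)
    next
      case False
      then have "x \<in> N i" using xS by simp
      then show ?thesis using MS R_new by simp
    qed
  qed
qed

lemma A_all: "i \<le> n \<Longrightarrow> A i"
proof (induction i)
  case 0
  then show ?case by (simp add: A_def)
next
  case (Suc i)
  then show ?case using stepL(3)[of i] by simp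
qed

lemma M_mono: "i \<le> j \<Longrightarrow> j \<le> n \<Longrightarrow> M i \<le> M j"
proof (induction j rule: dec_induct)
  case base
  then show ?case by simp
next
  case (step j)
  then show ?case using stepL(1,2)[of j] A_all[of j] by simp
qed


lemma join: assumes "v \<in> V" "v \<noteq> a"
  shows "\<exists>k<n. v \<notin> S k \<and> v \<in> N k"
proof -
  have ex: "v \<in> S n" using S_n assms by simp
  define j where "j = (LEAST j. v \<in> S j)"
  have vj: "v \<in> S j" unfolding j_def using ex by (rule LeastI)
  have jn: "j \<le> n" unfolding j_def using ex by (rule Least_le)
  have "j \<noteq> 0" using vj assms by (cases j) auto
  then obtain k where k: "j = Suc k" using not0_implies_Suc by blast
  have "v \<notin> S k" using not_less_Least[of k "\<lambda>j. v \<in> S j"] k j_def by auto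
  then show ?thesis using vj k jn by (intro exI[of _ k]) auto
qed

lemma mono: assumes "y \<in> S i" "v \<notin> S i" "v \<in> V"
  shows "R n y \<le> R n v"
proof -
  have "v \<noteq> a" using assms aS by auto
  then obtain k where k: "k < n" "v \<notin> S k" "v \<in> N k" using join assms by blast
  have ik: "i \<le> k"
  proof (rule ccontr)
    assume "\<not> i \<le> k"
    then have "S (Suc k) \<subseteq> S i" using S_mono[of "Suc k" i] by simp
    then show False using k assms by auto
  qed
  have "i \<le> n" using ik k by simp
  have "R n y = R i y" using R_keep assms(1) \<open>i \<le> n\<close> by blast
  also have "\<dots> \<le> M i" using R_le_M assms(1) .
  also have "\<dots> \<le> M k" using M_mono ik k by simp
  also have "\<dots> \<le> c k" using stepL(1)[of k] A_all[of k] k by simp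
  also have "\<dots> = R (Suc k) v" using R_new k by simp
  also have "\<dots> = R n v" using R_keep[of "Suc k" n v] k by simp
  finally show ?thesis .
qed

lemma key: assumes "u \<in> V" "E u v" "R n u < R n v"
  shows "\<exists>k<n. v \<notin> S k \<and> VT V E (S k) u = {v}"
proof -
  have vV: "v \<in> V" using sg assms by (auto simp: simple_graph_def)
  have uv: "u \<noteq> v" using sg assms by (auto simp: simple_graph_def)
  have "v \<noteq> a"
  proof
    assume "v = a"
    then have "u \<notin> S 0" using uv by simp
    then show False using mono[of v 0 u] assms \<open>v = a\<close> by simp
  qed
  then obtain k where k: "k < n" "v \<notin> S k" "v \<in> N k" using join vV by blast
  have uS: "u \<in> S k"
  proof (rule ccontr)
    assume nu: "u \<notin> S k"
    show False
    proof (cases "u \<in> S (Suc k)")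
      case True
      then have "u \<in> N k" using nu by simp
      then have "R (Suc k) u = R (Suc k) v" using R_new k by simp
      then show False using R_keep[of "Suc k" n u] R_keep[of "Suc k" n v] k True assms(3) by simp
    next
      case False
      then show False using mono[of v "Suc k" u] k assms by simp
    qed
  qed
  have vin: "v \<in> VT V E (S k) u" using k vV assms(2) by (auto simp: VT_def)
  have fin: "finite (VT V E (S k) u)" using VT_sub finV by (meson finite_Diff finite_subset)
  have "\<not> 2 \<le> card (VT V E (S k) u)"
  proof
    assume c2: "2 \<le> card (VT V E (S k) u)"
    have Ak: "A k" using A_all k by simp
    then have ru: "R k u = M k" using uS c2 by (simp add: A_def)
    have "u \<in> W2 V E (S k)" using uS c2 by (simp add: W2_def)
    then have w2: "us!k \<in> W2 V E (S k)" using choice k by auto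
    then have "R k (us!k) = M k" using Ak by (auto simp: A_def W2_def)
    then have "R (Suc k) v = R k u" using R_new k w2 ru by (simp add: c_def)
    then show False using R_keep[of "Suc k" n v] R_keep[of k n u] k uS assms(3) by simp
  qed
  then have "card (VT V E (S k) u) \<le> 1" by simp
  then have "VT V E (S k) u = {v}" using vin fin card_le_Suc0_iff_eq by fastforce
  then show ?thesis using k by blast
qed

lemma final: assumes "u \<in> V"
  shows "card {v \<in> V. E u v \<and> R n u < R n v} \<le> 1"
proof -
  have fin: "finite {v \<in> V. E u v \<and> R n u < R n v}" using finV by simp
  have "\<forall>v1\<in>{v \<in> V. E u v \<and> R n u < R n v}. \<forall>v2\<in>{v \<in> V. E u v \<and> R n u < R n v}. v1 = v2"
  proof (intro ballI)
    fix v1 v2 assume h1: "v1 \<in> {v \<in> V. E u v \<and> R n u < R n v}" and h2: "v2 \<in> {v \<in> V. E u v \<and> R n u < R n v}"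
    obtain k1 where k1: "k1 < n" "v1 \<notin> S k1" "VT V E (S k1) u = {v1}" using key assms h1 by blast
    obtain k2 where k2: "k2 < n" "v2 \<notin> S k2" "VT V E (S k2) u = {v2}" using key assms h2 by blast
    show "v1 = v2"
    proof (cases "k1 \<le> k2")
      case True
      then have "v2 \<notin> S k1" using S_mono k2 by blast
      then have "v2 \<in> VT V E (S k1) u" using h2 by (auto simp: VT_def)
      then show ?thesis using k1 by simp
    next
      case False
      then have "v1 \<notin> S k2" using S_mono[of k2 k1] k1 by auto
      then have "v1 \<in> VT V E (S k2) u" using h1 by (auto simp: VT_def)
      then show ?thesis using k2 by simp
    qed
  qed
  then show ?thesis using card_le_Suc0_iff_eq[OF fin] by simp
qed

end

theorem lemma2:
  fixes V :: "'a set" and E :: "'a \<Rightarrow> 'a \<Rightarrow> bool" and a :: 'a and us :: "'a list"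
  assumes "simple_graph V E" and "connected_graph V E"
    and "a \<in> V" and "card {v. E a v} \<ge> 2"
    and "tree_execution V E a us"
  shows "\<forall>u \<in> V. card {v \<in> V. E u v \<and> rank V E a us u < rank V E a us v} \<le> 1"
proof -
  interpret tex V E a us using assms by (simp add: tex_def)
  show ?thesis using final by (simp add: rank_def)
qed

end
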